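(* $SN_{d\beta}=ISN_{d\beta}$, i.e. a term $t\in\mathtt T_J$ is strongly normalizing for $\to_{d\beta}$ if and only if $t\in ISN_{d\beta}$.
   Context: Terms $\mathtt T_J$: $t,u,r ::= x \mid \lambda x.t \mid t(u,y.r)$ ($y$ bound in $r$), up to $\alpha$-equivalence; $\{u/x\}t$ capture-avoiding substitution. List contexts $\mathtt D ::= \Diamond \mid t(u,y.\mathtt D)$. Distant beta: $\mathtt D\langle\lambda x.t\rangle(u,y.r) \mapsto_{d\beta} \{\{u/x\}\mathtt D\langle t\rangle/y\}r$ (variables bound by $\mathtt D$ not free in $u$, $x$ not in $\mathtt D$), $\to_{d\beta}$ its closure under all contexts; $SN_{d\beta}$ is the set of terms with no infinite $\to_{d\beta}$-sequence. Neutral terms $\mathtt n ::= x \mid \mathtt n(u,y.\mathtt n)$; answers $\mathtt a ::= \lambda x.t \mid \mathtt n(u,y.\mathtt a)$; neutral list contexts $\mathtt D_n ::= \Diamond \mid \mathtt n(u,y.\mathtt D_n)$; weak-head contexts $\mathtt W ::= \Diamond \mid \mathtt W(u,y.r) \mid \mathtt n(u,y.\mathtt W)$. $ISN_{d\beta}$ is the smallest set of terms closed under the rules: (snvar) $x\in ISN_{d\beta}$; (snabs) if $t\in ISN_{d\beta}$ then $\lambda x.t\in ISN_{d\beta}$; (snapp) if $\mathtt n,u,r\in ISN_{d\beta}$ with $\mathtt n$ neutral and $r\in\mathtt n\cup\mathtt a$, then $\mathtt n(u,y.r)\in ISN_{d\beta}$; (snbeta) if $\mathtt W\langle\{\{u/x\}\mathtt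 D_n\langle s\rangle/y\}r\rangle\in ISN_{d\beta}$, $\mathtt D_n\langle s\rangle\in ISN_{d\beta}$ and $u\in ISN_{d\beta}$, then $\mathtt W\langle\mathtt D_n\langle\lambda x.s\rangle(u,y.r)\rangle\in ISN_{d\beta}$. *)

theory Defs
  imports Main
begin

text \<open>Terms of the lambda-J calculus in de Bruijn representation (terms up to
alpha-equivalence). In JApp t u r, the third argument binds one variable (y).\<close>

datatype trm = Var nat | Lam trm | JApp trm trm trm

fun dB_lift :: "trm \<Rightarrow> nat \<Rightarrow> trm" where
  "dB_lift (Var i) k = (if i < k then Var i else Var (Suc i))"
| "dB_lift (Lam t) k = Lam (dB_lift t (Suc k))"
| "dB_lift (JApp t u r) k = JApp (dB_lift t k) (dB_lift u k) (dB_lift r (Suc k))"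

fun dB_subst :: "trm \<Rightarrow> nat \<Rightarrow> trm \<Rightarrow> trm" where
  "dB_subst (Var i) k s = (if k < i then Var (i - 1) else if i = k then s else Var i)"
| "dB_subst (Lam t) k s = Lam (dB_subst t (Suc k) (dB_lift s 0))"
| "dB_subst (JApp t u r) k s =
     JApp (dB_subst t k s) (dB_subst u k s) (dB_subst r (Suc k) (dB_lift s 0))"

definition dB_liftn :: "nat \<Rightarrow> trm \<Rightarrow> trm" where
  "dB_liftn n u = ((\<lambda>x. dB_lift x 0) ^^ n) u"

text \<open>List contexts D ::= Hole | t(u, y.D): represented as the list of the pairs (t,u)
from the outside in; the hole lies under length D binders.\<close>
type_synonym lctx = "(trm \<times> trm) list"

fun plugD :: "lctx \<Rightarrow> trm \<Rightarrow> trm" where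
  "plugD [] s = s"
| "plugD ((t, u) # D) s = JApp t u (plugD D s)"

text \<open>contrD D t u = {u/x} D<t>, where x is the variable bound by the removed lambda
(index 0 of t); u is lifted over the binders of D (which are not free in u).\<close>
definition contrD :: "lctx \<Rightarrow> trm \<Rightarrow> trm \<Rightarrow> trm" where
  "contrD D t u = plugD D (dB_subst t 0 (dB_liftn (length D) u))"

inductive dbeta :: "trm \<Rightarrow> trm \<Rightarrow> bool" where
  root: "dbeta (JApp (plugD D (Lam t)) u r) (dB_subst r 0 (contrD D t u))"
| lam: "dbeta t t' \<Longrightarrow> dbeta (Lam t) (Lam t')"
| app1: "dbeta t t' \<Longrightarrow> dbeta (JApp t u r) (JApp t' u r)"
| app2: "dbeta u u' \<Longrightarrow> dbeta (JApp t u r) (JApp t u' r)"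
| app3: "dbeta r r' \<Longrightarrow> dbeta (JApp t u r) (JApp t u r')"

definition SN_dbeta :: "trm \<Rightarrow> bool" where
  "SN_dbeta t \<longleftrightarrow> \<not> (\<exists>f. f 0 = t \<and> (\<forall>i. dbeta (f i) (f (Suc i))))"

inductive neutral :: "trm \<Rightarrow> bool" where
  "neutral (Var i)"
| "neutral n \<Longrightarrow> neutral n' \<Longrightarrow> neutral (JApp n u n')"

inductive answer :: "trm \<Rightarrow> bool" where
  "answer (Lam t)"
| "neutral n \<Longrightarrow> answer a \<Longrightarrow> answer (JApp n u a)"

definition neutral_ctx :: "lctx \<Rightarrow> bool" where
  "neutral_ctx D \<longleftrightarrow> (\<forall>p \<in> set D. neutral (fst p))"

datatype wctx = WHole | WLeft wctx trm trm | WRight trm trm wctx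

fun plugW :: "wctx \<Rightarrow> trm \<Rightarrow> trm" where
  "plugW WHole s = s"
| "plugW (WLeft W u r) s = JApp (plugW W s) u r"
| "plugW (WRight n u W) s = JApp n u (plugW W s)"

fun wh_ctx :: "wctx \<Rightarrow> bool" where
  "wh_ctx WHole = True"
| "wh_ctx (WLeft W u r) = wh_ctx W"
| "wh_ctx (WRight n u W) = (neutral n \<and> wh_ctx W)"

fun liftD :: "nat \<Rightarrow> lctx \<Rightarrow> lctx" where
  "liftD k [] = []"
| "liftD k ((t, u) # D) = (dB_lift t k, dB_lift u k) # liftD (Suc k) D"

text \<open>open_body D s: the term D<s> in which x (bound by the lambda in D<\<lambda>x.s>) is free;
in de Bruijn form x becomes the new outermost free variable (index 0), i.e.
D<s> = {x/x}D<s> computed from the lifted term lift(D<\<lambda>x.s>).\<close>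
definition open_body :: "lctx \<Rightarrow> trm \<Rightarrow> trm" where
  "open_body D s = contrD (liftD 0 D) (dB_lift s (Suc (length D))) (Var 0)"

inductive ISN :: "trm \<Rightarrow> bool" where
  snvar: "ISN (Var i)"
| snabs: "ISN t \<Longrightarrow> ISN (Lam t)"
| snapp: "ISN n \<Longrightarrow> ISN u \<Longrightarrow> ISN r \<Longrightarrow> neutral n \<Longrightarrow> neutral r \<or> answer r
           \<Longrightarrow> ISN (JApp n u r)"
| snbeta: "wh_ctx W \<Longrightarrow> neutral_ctx D \<Longrightarrow>
           ISN (plugW W (dB_subst r 0 (contrD D s u))) \<Longrightarrow>
           ISN (open_body D s) \<Longrightarrow> ISN u \<Longrightarrow>
           ISN (plugW W (JApp (plugD D (Lam s)) u r))"

end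

theory Submission
  imports Defs "HOL-Library.Multiset"
begin


section \<open>Renamings\<close>

definition shf :: "(nat \<Rightarrow> nat) \<Rightarrow> nat \<Rightarrow> nat" where
  "shf f i = (case i of 0 \<Rightarrow> 0 | Suc j \<Rightarrow> Suc (f j))"

definition shn :: "nat \<Rightarrow> (nat \<Rightarrow> nat) \<Rightarrow> nat \<Rightarrow> nat" where
  "shn k f i = (if i < k then i else k + f (i - k))"

fun ren :: "(nat \<Rightarrow> nat) \<Rightarrow> trm \<Rightarrow> trm" where
  "ren f (Var i) = Var (f i)"
| "ren f (Lam t) = Lam (ren (shf f) t)"
| "ren f (JApp t u r) = JApp (ren f t) (ren f u) (ren (shf f) r)"

lemma shf_comp: "shf f \<circ> shf g = shf (f \<circ> g)"
  by (rule ext) (simp add: shf_def split: nat.splits)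

lemma ren_comp: "ren f (ren g t) = ren (f \<circ> g) t"
  by (induction t arbitrary: f g) (simp_all add: shf_comp)

lemma shf_id: "shf id = id"
  by (rule ext) (simp add: shf_def split: nat.splits)

lemma shf_id': "shf (\<lambda>x. x) = (\<lambda>x. x)"
  using shf_id by (simp add: id_def)

lemma ren_id: "ren (\<lambda>x. x) t = t"
  by (induction t) (simp_all add: shf_id')

lemma ren_ext: "(\<And>i. f i = g i) \<Longrightarrow> ren f t = ren g t"
proof -
  assume "\<And>i. f i = g i" then have "f = g" by auto
  then show ?thesis by simp
qed

lemma lift_ren: "dB_lift t k = ren (\<lambda>i. if i < k then i else Suc i) t"
proof (induction t arbitrary: k)
  case (Lam t)
  have "shf (\<lambda>i. if i < k then i else Suc i) = (\<lambda>i. if i < Suc k then i else Suc i)"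
    by (rule ext) (simp add: shf_def split: nat.splits)
  then show ?case using Lam by simp
next
  case (JApp t1 t2 t3)
  have "shf (\<lambda>i. if i < k then i else Suc i) = (\<lambda>i. if i < Suc k then i else Suc i)"
    by (rule ext) (simp add: shf_def split: nat.splits)
  then show ?case using JApp by simp
qed simp

lemma subst_var_ren: "dB_subst t k (Var j) = ren (\<lambda>i. if k < i then i - 1 else if i = k then j else i) t"
proof (induction t arbitrary: k j)
  case (Lam t)
  have "shf (\<lambda>i. if k < i then i - 1 else if i = k then j else i) =
        (\<lambda>i. if Suc k < i then i - 1 else if i = Suc k then Suc j else i)"
    by (rule ext) (simp add: shf_def split: nat.splits)
  then show ?case using Lam by simp
next
  case (JApp t1 t2 t3)
  have "shf (\<lambda>i. if k < i then i - 1 else if i = k then j else i) =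
        (\<lambda>i. if Suc k < i then i - 1 else if i = Suc k then Suc j else i)"
    by (rule ext) (simp add: shf_def split: nat.splits)
  then show ?case using JApp by simp
qed simp

lemma shf_shn: "shf (shn k f) = shn (Suc k) f"
proof (rule ext)
  fix i show "shf (shn k f) i = shn (Suc k) f i"
    by (cases i) (auto simp add: shf_def shn_def)
qed

lemma shn_shf: "shn k (shf f) = shn (Suc k) f"
proof (rule ext)
  fix i show "shn k (shf f) i = shn (Suc k) f i"
  proof (cases "i - k")
    case (Suc m)
    then have "i - Suc k = m" by arith
    then show ?thesis using Suc by (auto simp add: shf_def shn_def)
  qed (auto simp add: shf_def shn_def)
qed

lemma shn_0: "shn 0 f = f"
  by (rule ext) (simp add: shn_def)

lemma ren_lift0: "ren (shn (Suc k) g) (dB_lift u 0) = dB_lift (ren (shn k g) u) 0"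
  by (simp add: lift_ren ren_comp o_def) (rule ren_ext, simp add: shn_def)

lemma ren_subst_gen:
  "ren (shn k g) (dB_subst t k u) = dB_subst (ren (shn (Suc k) g) t) k (ren (shn k g) u)"
proof (induction t arbitrary: k u)
  case (Var i)
  show ?case by (auto simp add: shn_def)
next
  case (Lam t)
  then show ?case by (simp add: shf_shn ren_lift0)
next
  case (JApp t1 t2 t3)
  then show ?case by (simp add: shf_shn ren_lift0)
qed

lemma ren_subst0: "ren f (dB_subst t 0 u) = dB_subst (ren (shf f) t) 0 (ren f u)"
  using ren_subst_gen[of 0 f t u] by (simp add: shn_0 shf_shn[symmetric])

fun renD :: "(nat \<Rightarrow> nat) \<Rightarrow> lctx \<Rightarrow> lctx" where
  "renD f [] = []"
| "renD f ((a, b) # D) = (ren f a, ren f b) # renD (shf f) D"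

lemma length_renD[simp]: "length (renD f D) = length D"
  by (induction f D rule: renD.induct) auto

lemma ren_plugD: "ren f (plugD D x) = plugD (renD f D) (ren (shn (length D) f) x)"
  by (induction f D arbitrary: x rule: renD.induct) (simp_all add: shn_0 shn_shf)

lemma liftn_ren: "dB_liftn n u = ren (\<lambda>i. i + n) u"
proof (induction n arbitrary: u)
  case 0 then show ?case by (simp add: dB_liftn_def ren_id)
next
  case (Suc n)
  have "dB_liftn (Suc n) u = dB_lift (dB_liftn n u) 0" by (simp add: dB_liftn_def)
  then show ?case using Suc by (simp add: lift_ren ren_comp o_def)
qed

lemma ren_liftn: "ren (shn n f) (dB_liftn n u) = dB_liftn n (ren f u)"
  by (simp add: liftn_ren ren_comp o_def shn_def add.commute)

lemma ren_contrD: "ren f (contrD D t u) = contrD (renD f D) (ren (shn (Suc (length D)) f) t) (ren f u)"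
proof -
  have "ren (shn (length D) f) (dB_subst t 0 (dB_liftn (length D) u)) =
     dB_subst (ren (shf (shn (length D) f)) t) 0 (dB_liftn (length D) (ren f u))"
    by (simp add: ren_subst0 ren_liftn)
  then show ?thesis by (simp add: contrD_def ren_plugD shf_shn)
qed

lemma dbeta_ren: "dbeta t t' \<Longrightarrow> dbeta (ren f t) (ren f t')"
proof (induction arbitrary: f rule: dbeta.induct)
  case (root D t u r)
  have "ren f (JApp (plugD D (Lam t)) u r) =
        JApp (plugD (renD f D) (Lam (ren (shn (Suc (length D)) f) t))) (ren f u) (ren (shf f) r)"
    by (simp add: ren_plugD shf_shn)
  moreover have "ren f (dB_subst r 0 (contrD D t u)) =
     dB_subst (ren (shf f) r) 0 (contrD (renD f D) (ren (shn (Suc (length D)) f) t) (ren f u))"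
    by (simp add: ren_subst0 ren_contrD)
  ultimately show ?case by (simp add: dbeta.root)
qed (auto intro: dbeta.intros)

lemma size_ren[simp]: "size (ren f t) = size t"
  by (induction t arbitrary: f) auto

lemma neutral_ren: "neutral t \<Longrightarrow> neutral (ren f t)"
  by (induction t arbitrary: f rule: neutral.induct) (auto intro: neutral.intros)



inductive_cases neutral_JAppE: "neutral (JApp a b c)"
inductive_cases neutral_LamE: "neutral (Lam t)"
inductive_cases answer_JAppE: "answer (JApp a b c)"
inductive_cases dbeta_JAppE: "dbeta (JApp a b c) X"
inductive_cases dbeta_LamE: "dbeta (Lam a) X"
inductive_cases dbeta_VarE: "dbeta (Var i) X"

lemma not_neutral_plugD_Lam: "\<not> neutral (plugD D (Lam s))"
  by (induction D) (auto elim: neutral_JAppE neutral_LamE)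

lemma dbeta_JApp_cases:
  assumes "dbeta (JApp a b c) X"
  obtains (root) D t where "a = plugD D (Lam t)" "X = dB_subst c 0 (contrD D t b)"
  | (app1) a' where "dbeta a a'" "X = JApp a' b c"
  | (app2) b' where "dbeta b b'" "X = JApp a b' c"
  | (app3) c' where "dbeta c c'" "X = JApp a b c'"
  using assms by (cases rule: dbeta.cases) auto

lemma neutral_dbeta: "neutral t \<Longrightarrow> dbeta t t' \<Longrightarrow> neutral t'"
proof (induction t arbitrary: t' rule: neutral.induct)
  case (1 i) then show ?case by (auto elim: dbeta_VarE)
next
  case (2 n n' u)
  from 2(5) show ?case
  proof (cases rule: dbeta_JApp_cases)
    case (root D t)
    then show ?thesis using 2(1) not_neutral_plugD_Lam by metis
  qed (auto intro: neutral.intros 2)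
qed

lemma answer_plugD: "answer a \<Longrightarrow> \<exists>D s. a = plugD D (Lam s) \<and> neutral_ctx D"
proof (induction rule: answer.induct)
  case (1 t)
  then show ?case by (rule_tac x="[]" in exI) (auto simp: neutral_ctx_def)
next
  case (2 n a u)
  then obtain D s where "a = plugD D (Lam s)" "neutral_ctx D" by auto
  then show ?case using 2 by (rule_tac x="(n,u)#D" in exI) (auto simp: neutral_ctx_def)
qed

lemma classify:
  "neutral t \<or> answer t \<or> (\<exists>W D s u r. wh_ctx W \<and> neutral_ctx D \<and> t = plugW W (JApp (plugD D (Lam s)) u r))"
proof (induction t)
  case (Var x) then show ?case by (auto intro: neutral.intros)
next
  case (Lam t) then show ?case by (auto intro: answer.intros)
next
  case (JApp t u r)
  from JApp.IH(1) show ?case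
  proof (elim disjE exE conjE)
    assume nt: "neutral t"
    from JApp.IH(3) show ?thesis
    proof (elim disjE exE conjE)
      assume "neutral r" then show ?thesis using nt by (auto intro: neutral.intros)
    next
      assume "answer r" then show ?thesis using nt by (auto intro: answer.intros)
    next
      fix W D s u' r'
      assume "wh_ctx W" "neutral_ctx D" "r = plugW W (JApp (plugD D (Lam s)) u' r')"
      then show ?thesis using nt
        by (intro disjI2) (rule_tac x="WRight t u W" in exI, auto)
    qed
  next
    assume "answer t"
    then obtain D s where "t = plugD D (Lam s)" "neutral_ctx D" using answer_plugD by blast
    then show ?thesis by (intro disjI2) (rule_tac x="WHole" in exI, auto)
  next
    fix W D s u' r'
    assume "wh_ctx W" "neutral_ctx D" "t = plugW W (JApp (plugD D (Lam s)) u' r')"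
    then show ?thesis by (intro disjI2) (rule_tac x="WLeft W u r" in exI, auto)
  qed
qed

lemma plugW_dbeta: "dbeta X Y \<Longrightarrow> dbeta (plugW W X) (plugW W Y)"
  by (induction W) (auto intro: dbeta.intros)

lemma not_neutral_plugW: "\<not> neutral (plugW W (JApp (plugD D (Lam s)) u r))"
  by (induction W) (auto elim!: neutral_JAppE simp: not_neutral_plugD_Lam)

section \<open>SN as accessibility\<close>

abbreviation dbr :: "trm \<Rightarrow> trm \<Rightarrow> bool" where "dbr a b \<equiv> dbeta b a"

lemma accp_SN: "Wellfounded.accp dbr t \<Longrightarrow> SN_dbeta t"
proof (induction rule: Wellfounded.accp.induct)
  case (accI x)
  show ?case unfolding SN_dbeta_def
  proof
    assume "\<exists>f. f 0 = x \<and> (\<forall>i. dbeta (f i) (f (Suc i)))"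
    then obtain f where f: "f 0 = x" "\<forall>i. dbeta (f i) (f (Suc i))" by blast
    have "dbeta x (f 1)" using f by (metis One_nat_def)
    then have "SN_dbeta (f 1)" using accI by blast
    moreover have "\<exists>g. g 0 = f 1 \<and> (\<forall>i. dbeta (g i) (g (Suc i)))"
      using f by (rule_tac x="\<lambda>i. f (Suc i)" in exI) simp
    ultimately show False unfolding SN_dbeta_def by blast
  qed
qed

lemma SN_accp: "SN_dbeta t \<Longrightarrow> Wellfounded.accp dbr t"
proof (rule ccontr)
  assume sn: "SN_dbeta t" and na: "\<not> Wellfounded.accp dbr t"
  define nxt where "nxt x = (SOME y. dbeta x y \<and> \<not> Wellfounded.accp dbr y)" for x
  have nxt: "dbeta x (nxt x) \<and> \<not> Wellfounded.accp dbr (nxt x)" if nx: "\<not> Wellfounded.accp dbr x" for x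
  proof -
    obtain z where "dbr z x" "\<not> Wellfounded.accp dbr z" using not_accp_down[OF nx] by blast
    then show ?thesis unfolding nxt_def by (rule_tac someI_ex) blast
  qed
  define f where "f n = (nxt ^^ n) t" for n
  have "\<not> Wellfounded.accp dbr (f n)" for n
    by (induction n) (auto simp: f_def na nxt)
  then have "dbeta (f n) (f (Suc n))" for n using nxt by (simp add: f_def)
  moreover have "f 0 = t" by (simp add: f_def)
  ultimately show False using sn unfolding SN_dbeta_def by blast
qed

section \<open>Components\<close>

definition bk :: "nat \<Rightarrow> nat \<Rightarrow> nat" where
  "bk i j = (if j < i then Suc j else if j = i then 0 else j)"
definition unl :: "nat \<Rightarrow> nat \<Rightarrow> nat" where
  "unl i j = (if j < i then j else j - 1)"

fun Gf :: "nat \<Rightarrow> nat \<Rightarrow> trm \<Rightarrow> trm" where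
  "Gf i 0 X = Lam (ren (bk i) X)"
| "Gf i (Suc m) (JApp a b c) = JApp (ren (unl i) a) (ren (unl i) b) (Gf (Suc i) m c)"
| "Gf i (Suc m) (Var j) = Var j"
| "Gf i (Suc m) (Lam t) = Lam t"

fun spine :: "nat \<Rightarrow> trm \<Rightarrow> bool" where
  "spine 0 X = True"
| "spine (Suc m) (JApp a b c) = (neutral a \<and> spine m c)"
| "spine (Suc m) (Var j) = False"
| "spine (Suc m) (Lam t) = False"

lemma length_liftD[simp]: "length (liftD k D) = length D"
  by (induction k D rule: liftD.induct) auto

lemma Gf_open_gen:
  "Gf i (length D) (plugD (liftD i D) (dB_subst (dB_lift s (Suc (i + length D))) 0 (Var (i + length D))))
   = plugD D (Lam s)"
proof (induction D arbitrary: i)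
  case Nil
  have "ren (bk i) (dB_subst (dB_lift s (Suc i)) 0 (Var i)) = ren (\<lambda>x. x) s"
    by (simp add: subst_var_ren lift_ren ren_comp o_def) (rule ren_ext, auto simp add: bk_def)
  then show ?case by (simp add: ren_id)
next
  case (Cons p D)
  obtain a b where p: "p = (a, b)" by (cases p)
  have "ren (unl i) (dB_lift x i) = x" for x
    by (simp add: lift_ren ren_comp o_def, subst (2) ren_id[symmetric]) (rule ren_ext, auto simp add: unl_def)
  then show ?case using Cons[of "Suc i"] by (simp add: p)
qed

lemma Gf_open: "Gf 0 (length D) (open_body D s) = plugD D (Lam s)"
  using Gf_open_gen[of 0 D s]
  by (simp add: open_body_def contrD_def liftn_ren)

lemma spine_gen: "neutral_ctx D \<Longrightarrow> spine (length D) (plugD (liftD i D) S)"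
proof (induction D arbitrary: i)
  case (Cons p D)
  obtain a b where p: "p = (a, b)" by (cases p)
  then have "neutral a" "neutral_ctx D" using Cons.prems by (auto simp: neutral_ctx_def)
  then show ?case using Cons.IH p by (simp add: lift_ren neutral_ren)
qed simp

lemma spine_open: "neutral_ctx D \<Longrightarrow> spine (length D) (open_body D s)"
  unfolding open_body_def contrD_def using spine_gen[of D 0] by simp

lemma Gf_sim: "spine m X \<Longrightarrow> dbeta X X' \<Longrightarrow> spine m X' \<and> dbeta (Gf i m X) (Gf i m X')"
proof (induction m arbitrary: i X X')
  case 0
  then show ?case by (auto intro: dbeta.intros dbeta_ren)
next
  case (Suc m)
  then obtain a b c where X: "X = JApp a b c" "neutral a" "spine m c"
    by (cases X) auto
  from Suc.prems(2) X(1) have "dbeta (JApp a b c) X'" by simp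
  then show ?case
  proof (cases rule: dbeta_JApp_cases)
    case (root D t)
    then show ?thesis using X(2) not_neutral_plugD_Lam by metis
  next
    case (app1 a')
    then show ?thesis using X neutral_dbeta by (auto intro: dbeta.intros dbeta_ren)
  next
    case (app2 b')
    then show ?thesis using X by (auto intro: dbeta.intros dbeta_ren)
  next
    case (app3 c')
    then show ?thesis using X Suc.IH by (auto intro: dbeta.intros)
  qed
qed

lemma Gf_size: "spine m X \<Longrightarrow> size X < size (Gf i m X)"
proof (induction m arbitrary: i X)
  case (Suc m)
  then obtain a b c where X: "X = JApp a b c" "spine m c" by (cases X) auto
  then show ?case using Suc.IH by auto
qed simp

inductive cmp :: "trm \<Rightarrow> trm \<Rightarrow> bool" where
  c_lam: "cmp t (Lam t)"
| c_app1: "cmp t (JApp t u r)"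
| c_app2: "cmp u (JApp t u r)"
| c_app3: "cmp r (JApp t u r)"
| c_open: "spine m X \<Longrightarrow> cmp X (Gf i m X)"

lemma cmp_size: "cmp a b \<Longrightarrow> size a < size b"
  by (induction rule: cmp.induct) (auto simp: Gf_size)

lemma cmp_sim: "cmp a b \<Longrightarrow> dbeta a a' \<Longrightarrow> \<exists>b'. dbeta b b' \<and> cmp a' b'"
proof (induction rule: cmp.induct)
  case (c_open m X i)
  then show ?case using Gf_sim by (meson cmp.c_open)
qed (auto intro: dbeta.intros cmp.intros)

lemma cmps_sim: "cmp\<^sup>*\<^sup>* a b \<Longrightarrow> dbeta a a' \<Longrightarrow> \<exists>b'. dbeta b b' \<and> cmp\<^sup>*\<^sup>* a' b'"
proof (induction rule: rtranclp_induct)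
  case base then show ?case by auto
next
  case (step y z)
  then obtain y' where "dbeta y y'" "cmp\<^sup>*\<^sup>* a' y'" by auto
  then obtain z' where "dbeta z z'" "cmp y' z'" using cmp_sim step(2) by blast
  then show ?case using \<open>cmp\<^sup>*\<^sup>* a' y'\<close> by (meson rtranclp.rtrancl_into_rtrancl)
qed

lemma cmps_size: "cmp\<^sup>*\<^sup>* a b \<Longrightarrow> size a \<le> size b"
  by (induction rule: rtranclp_induct) (auto dest: cmp_size)

lemma cmp_plugW: "cmp\<^sup>*\<^sup>* X (plugW W X)"
proof (induction W)
  case (WLeft W u r)
  then show ?case by (simp add: rtranclp.rtrancl_into_rtrancl c_app1)
next
  case (WRight n u W)
  then show ?case by (simp add: rtranclp.rtrancl_into_rtrancl c_app3)
qed simp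

section \<open>Completeness: SN implies ISN\<close>

lemma SN_ISN_gen: "Wellfounded.accp dbr t \<Longrightarrow> cmp\<^sup>*\<^sup>* x t \<Longrightarrow> ISN x"
proof (induction arbitrary: x rule: Wellfounded.accp.induct)
  case (accI t)
  note outer = accI.IH
  show ?case using accI.prems
  proof (induction x rule: measure_induct_rule[where f=size])
    case (less x)
    have sub: "ISN y" if "cmp y x" for y
      using less.IH[of y] that cmp_size[OF that] less.prems
      by (meson rtranclp.rtrancl_into_rtrancl converse_rtranclp_into_rtranclp)
    have sub2: "ISN y" if "cmp\<^sup>+\<^sup>+ y x" for y
    proof -
      have "size y < size x" using that
        by (induction rule: tranclp_induct) (auto dest: cmp_size)
      moreover have "cmp\<^sup>*\<^sup>* y t" using that less.prems by (meson rtranclp_trans tranclp_into_rtranclp)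
      ultimately show ?thesis using less.IH by blast
    qed
    have red: "ISN y" if xy: "dbeta x y" for y
    proof -
      obtain t' where "dbeta t t'" "cmp\<^sup>*\<^sup>* y t'" using cmps_sim[OF less.prems xy] by blast
      then show ?thesis using outer by blast
    qed
    from classify[of x] show ?case
    proof (elim disjE exE conjE)
      assume "neutral x"
      then show ?thesis
      proof (cases rule: neutral.cases)
        case (1 i) then show ?thesis by (simp add: ISN.snvar)
      next
        case (2 n n' u)
        then show ?thesis using sub by (auto intro!: ISN.snapp intro: cmp.intros)
      qed
    next
      assume "answer x"
      then show ?thesis
      proof (cases rule: answer.cases)
        case (1 t) then show ?thesis using sub by (auto intro!: ISN.snabs intro: cmp.intros)
      next
        case (2 n a u)
        then show ?thesis using sub by (auto intro!: ISN.snapp intro: cmp.intros)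
      qed
    next
      fix W D s u r
      assume W: "wh_ctx W" and D: "neutral_ctx D" and x: "x = plugW W (JApp (plugD D (Lam s)) u r)"
      have c1: "cmp\<^sup>*\<^sup>* (JApp (plugD D (Lam s)) u r) x" using x cmp_plugW by simp
      have "ISN (plugW W (dB_subst r 0 (contrD D s u)))"
        using red x by (simp add: plugW_dbeta dbeta.root)
      moreover have "ISN u"
        using sub2 c1 c_app2 by (meson rtranclp_into_tranclp2)
      moreover have "ISN (open_body D s)"
      proof -
        have "cmp (open_body D s) (plugD D (Lam s))"
          using c_open[OF spine_open[OF D], where i=0] by (simp add: Gf_open)
        moreover have "cmp (plugD D (Lam s)) (JApp (plugD D (Lam s)) u r)" by (rule c_app1)
        ultimately have "cmp\<^sup>+\<^sup>+ (open_body D s) (JApp (plugD D (Lam s)) u r)"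
          by (meson tranclp.r_into_trancl tranclp.trancl_into_trancl)
        then have "cmp\<^sup>+\<^sup>+ (open_body D s) x" using c1
          by (meson tranclp_rtranclp_tranclp)
        then show ?thesis using sub2 by blast
      qed
      ultimately show ?thesis using x W D by (auto intro: ISN.snbeta)
    qed
  qed
qed

lemma SN_ISN: "SN_dbeta t \<Longrightarrow> ISN t"
  using SN_ISN_gen[OF SN_accp] by blast



datatype ty = TB | Arr "ty multiset" ty

type_synonym ctx = "nat \<Rightarrow> ty multiset"

definition cadd :: "ctx \<Rightarrow> ctx \<Rightarrow> ctx" (infixl "\<oplus>" 65) where
  "cadd G H = (\<lambda>i. G i + H i)"
definition cz :: ctx where "cz = (\<lambda>i. {#})"

definition ctl :: "ctx \<Rightarrow> ctx" where "ctl G = (\<lambda>i. G (Suc i))"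
definition cdel :: "nat \<Rightarrow> ctx \<Rightarrow> ctx" where "cdel k G = (\<lambda>i. if i < k then G i else G (Suc i))"
definition cins :: "nat \<Rightarrow> ty multiset \<Rightarrow> ctx \<Rightarrow> ctx" where
  "cins k M G = (\<lambda>i. if i < k then G i else if i = k then M else G (i - 1))"
definition csing :: "nat \<Rightarrow> ty \<Rightarrow> ctx" where "csing i s = (\<lambda>j. if j = i then {#s#} else {#})"
definition cle :: "ctx \<Rightarrow> ctx \<Rightarrow> bool" where "cle G H = (\<forall>i. G i \<subseteq># H i)"
definition arrs :: "(ty multiset \<times> ty) multiset \<Rightarrow> ty multiset" where
  "arrs P = image_mset (\<lambda>p. Arr (fst p) (snd p)) P"

inductive tj :: "ctx \<Rightarrow> trm \<Rightarrow> ty \<Rightarrow> nat \<Rightarrow> bool"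
  and mtj :: "ctx \<Rightarrow> trm \<Rightarrow> ty multiset \<Rightarrow> nat \<Rightarrow> bool" where
  tvar: "tj (csing i s) (Var i) s 1"
| tlam: "tj G t s n \<Longrightarrow> G 0 \<subseteq># M \<Longrightarrow> tj (ctl G) (Lam t) (Arr M s) (Suc n)"
| tapp: "mtj G t A n1 \<Longrightarrow> A \<noteq> {#} \<Longrightarrow> mtj H u B n2 \<Longrightarrow> B \<noteq> {#} \<Longrightarrow> tj L r s n3 \<Longrightarrow>
    arrs P \<subseteq># A \<Longrightarrow> L 0 \<subseteq># image_mset snd P \<Longrightarrow> sum_mset (image_mset fst P) \<subseteq># B \<Longrightarrow>
    tj (G \<oplus> H \<oplus> ctl L) (JApp t u r) s (Suc (n1 + n2 + n3))"
| mnil: "mtj cz t {#} 0"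
| mcons: "tj G t s n \<Longrightarrow> mtj H t A m \<Longrightarrow> mtj (G \<oplus> H) t (add_mset s A) (n + m)"

inductive_cases tj_VarE: "tj G (Var i) s n"
inductive_cases tj_LamE: "tj G (Lam t) s n"
inductive_cases tj_JAppE: "tj G (JApp t u r) s n"
inductive_cases mtj_E: "mtj G t A n"

lemma mtj_induct[consumes 1, case_names nil cons]:
  assumes "mtj G t A n" "P cz {#} 0"
    "\<And>G s n H A m. tj G t s n \<Longrightarrow> mtj H t A m \<Longrightarrow> P H A m \<Longrightarrow> P (G \<oplus> H) (add_mset s A) (n + m)"
  shows "P G A n"
proof -
  have "(tj G1 t1 s1 n1 \<longrightarrow> True) \<and> (mtj G t' A n \<longrightarrow> t' = t \<longrightarrow> P G A n)" for G1 t1 s1 n1 t'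
    by (rule tj_mtj.induct[where ?P1.0="\<lambda>_ _ _ _. True" and ?P2.0="\<lambda>G t' A n. t' = t \<longrightarrow> P G A n"])
       (use assms in auto)
  then show ?thesis using assms(1) by blast
qed

lemma ctx_plus_apply: "(G \<oplus> H) i = G i + H i" by (simp add: cadd_def)
lemma ctx_plus_apply0[simp]: "(G \<oplus> H) 0 = G 0 + H 0" by (simp add: cadd_def)
lemma ctx_plus_applyS[simp]: "(G \<oplus> H) (Suc i) = G (Suc i) + H (Suc i)" by (simp add: cadd_def)
lemma cz_apply0[simp]: "cz 0 = {#}" "cz (Suc i) = {#}" by (simp_all add: cz_def)
lemma cz_apply: "cz i = {#}" by (simp add: cz_def)
lemma cadd_assoc: "(G \<oplus> H) \<oplus> K = G \<oplus> (H \<oplus> K)" by (simp add: cadd_def add.assoc)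
lemma cadd_commute: "G \<oplus> H = H \<oplus> G" by (simp add: cadd_def add.commute)
lemma cadd_left_commute: "G \<oplus> (H \<oplus> K) = H \<oplus> (G \<oplus> K)" by (simp add: cadd_def add.left_commute)
lemmas cadd_ac = cadd_assoc cadd_commute cadd_left_commute
lemma cadd_cz[simp]: "G \<oplus> cz = G" "cz \<oplus> G = G" by (simp_all add: cadd_def cz_def)
lemma ctl_plus[simp]: "ctl (G \<oplus> H) = ctl G \<oplus> ctl H" by (simp add: ctl_def cadd_def)
lemma cdel_plus[simp]: "cdel k (G \<oplus> H) = cdel k G \<oplus> cdel k H" by (simp add: cdel_def cadd_def fun_eq_iff)
lemma cins_empty_plus[simp]: "cins k {#} (G \<oplus> H) = cins k {#} G \<oplus> cins k {#} H"
  by (simp add: cins_def cadd_def fun_eq_iff)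
lemma ctl_zero[simp]: "ctl cz = cz" by (simp add: ctl_def cz_def)
lemma cdel_zero[simp]: "cdel k cz = cz" by (simp add: cdel_def cz_def)
lemma cins_zero[simp]: "cins k {#} cz = cz" by (auto simp add: cins_def cz_def fun_eq_iff)
lemma ctl_cins_Suc[simp]: "ctl (cins (Suc k) M G) = cins k M (ctl G)" by (simp add: ctl_def cins_def fun_eq_iff)
lemma cins_Suc_0[simp]: "cins (Suc k) M G 0 = G 0" by (simp add: cins_def)
lemma ctl_cdel_Suc[simp]: "ctl (cdel (Suc k) G) = cdel k (ctl G)" by (simp add: ctl_def cdel_def fun_eq_iff)
lemma cdel_Suc_0[simp]: "cdel (Suc k) G 0 = G 0" by (simp add: cdel_def)
lemma ctl_cins0[simp]: "ctl (cins 0 M G) = G" by (simp add: ctl_def cins_def fun_eq_iff)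
lemma cins0_0[simp]: "cins 0 M G 0 = M" by (simp add: cins_def)
lemma cdel0_ctl: "cdel 0 G = ctl G" by (simp add: ctl_def cdel_def fun_eq_iff)
lemma ctl_apply: "ctl G k = G (Suc k)" by (simp add: ctl_def)
lemma cins_csing: "cins k {#} (csing i s) = csing (if i < k then i else Suc i) s"
  by (auto simp add: cins_def csing_def fun_eq_iff)
lemma cdel_csing: "i \<noteq> k \<Longrightarrow> cdel k (csing i s) = csing (if k < i then i - 1 else i) s"
  by (auto simp add: cdel_def csing_def fun_eq_iff)
lemma cdel_csing_same[simp]: "cdel k (csing k s) = cz"
  by (auto simp add: cdel_def csing_def cz_def fun_eq_iff)
lemma csing_apply: "csing i s k = (if k = i then {#s#} else {#})" by (simp add: csing_def)
lemma cins_cdel: "cins k (G k) (cdel k G) = G"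
  by (auto simp add: cins_def cdel_def fun_eq_iff)
lemma cdel_cins: "cdel k (cins k M G) = G"
  by (auto simp add: cins_def cdel_def fun_eq_iff)
lemma cins_apply_same[simp]: "cins k M G k = M" by (simp add: cins_def)

lemma cle_refl[simp]: "cle G G" by (simp add: cle_def)
lemma cle_trans: "cle G H \<Longrightarrow> cle H K \<Longrightarrow> cle G K" by (meson cle_def subset_mset.order_trans)
lemma cle_plus: "cle G G' \<Longrightarrow> cle H H' \<Longrightarrow> cle (G \<oplus> H) (G' \<oplus> H')"
  by (simp add: cle_def subset_mset.add_mono ctx_plus_apply)
lemma cle_plus_right[simp]: "cle G (G \<oplus> H)" by (simp add: cle_def ctx_plus_apply)
lemmas capp = ctx_plus_apply cz_apply
lemma cle_ctl: "cle G H \<Longrightarrow> cle (ctl G) (ctl H)" by (simp add: cle_def ctl_apply)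

lemma tvar1: "tj (csing i s) (Var i) s (Suc 0)" using tj_mtj.tvar by simp

lemma mtj_single: "tj G t s n \<Longrightarrow> mtj G t {#s#} n"
  using mcons[OF _ mnil, of G t s n] by simp

lemma mtj_add: "mtj G1 t A n1 \<Longrightarrow> mtj G2 t B n2 \<Longrightarrow> mtj (G1 \<oplus> G2) t (A + B) (n1 + n2)"
proof (induction rule: mtj_induct)
  case nil then show ?case by simp
next
  case (cons G s n H A m)
  then have "mtj (G \<oplus> (H \<oplus> G2)) t (add_mset s (A + B)) (n + (m + n2))" by (simp add: mcons)
  then show ?case by (simp add: cadd_assoc add.assoc)
qed

lemma mtj_emptyD: "mtj G t {#} n \<Longrightarrow> G = cz \<and> n = 0"
  by (auto elim: mtj_E)

lemma mtj_elem: "mtj G t A n \<Longrightarrow> s \<in># A \<Longrightarrow>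
  \<exists>G1 G2 n1 n2. tj G1 t s n1 \<and> mtj G2 t (A - {#s#}) n2 \<and> G = G1 \<oplus> G2 \<and> n = n1 + n2"
proof (induction rule: mtj_induct)
  case nil then show ?case by simp
next
  case (cons G s' n H A m)
  show ?case
  proof (cases "s = s'")
    case True then show ?thesis using cons by auto
  next
    case False
    then have "s \<in># A" using cons by auto
    then obtain G1 G2 n1 n2 where h: "tj G1 t s n1" "mtj G2 t (A - {#s#}) n2" "H = G1 \<oplus> G2" "m = n1 + n2"
      using cons by blast
    have "mtj (G \<oplus> G2) t (add_mset s' (A - {#s#})) (n + n2)"
      using mcons[OF cons(1) h(2)] .
    moreover have "add_mset s' (A - {#s#}) = add_mset s' A - {#s#}" using False by simp
    ultimately show ?thesis using h
      by (rule_tac x=G1 in exI, rule_tac x="G \<oplus> G2" in exI) (auto simp: cadd_ac)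
  qed
qed

lemma mtj_single_D: "mtj G t {#s#} n \<Longrightarrow> tj G t s n"
  using mtj_elem[of G t "{#s#}" n s] mtj_emptyD by fastforce

lemma mtj_split: "mtj G t (A + B) n \<Longrightarrow>
  \<exists>G1 G2 n1 n2. mtj G1 t A n1 \<and> mtj G2 t B n2 \<and> G = G1 \<oplus> G2 \<and> n = n1 + n2"
proof (induction A arbitrary: G n)
  case empty then show ?case using mnil[of t] by fastforce
next
  case (add x A)
  obtain G1 G2 n1 n2 where h1: "tj G1 t x n1" "mtj G2 t (A + B) n2" "G = G1 \<oplus> G2" "n = n1 + n2"
    using mtj_elem[OF add.prems, of x] by auto
  moreover obtain H1 H2 m1 m2 where h2: "mtj H1 t A m1" "mtj H2 t B m2" "G2 = H1 \<oplus> H2" "n2 = m1 + m2"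
    using add.IH h1(2) by blast
  ultimately show ?case
    by (rule_tac x="G1 \<oplus> H1" in exI, rule_tac x=H2 in exI, rule_tac x="n1 + m1" in exI)
       (auto simp: cadd_ac intro: mcons)
qed

lemma mtj_sub: "mtj G t A n \<Longrightarrow> A' \<subseteq># A \<Longrightarrow>
  \<exists>G1 G2 n1 n2. mtj G1 t A' n1 \<and> mtj G2 t (A - A') n2 \<and> G = G1 \<oplus> G2 \<and> n = n1 + n2"
  using mtj_split[of G t A' "A - A'" n] by (simp add: subset_mset.add_diff_inverse)

lemma mtj_typable: "mtj G t A n \<Longrightarrow> A \<noteq> {#} \<Longrightarrow> \<exists>G' s n'. tj G' t s n'"
  by (induction rule: mtj_induct) auto



section \<open>Lifting and unlifting typings\<close>

lemma tj_lift:
  "tj G t s n \<Longrightarrow> tj (cins k {#} G) (dB_lift t k) s n"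
  "mtj G t A n \<Longrightarrow> mtj (cins k {#} G) (dB_lift t k) A n"
proof (induction arbitrary: k and k rule: tj_mtj.inducts)
  case (tvar i s)
  then show ?case by (auto simp: cins_csing intro: tvar1)
next
  case (tlam G t s n M)
  have "tj (ctl (cins (Suc k) {#} G)) (Lam (dB_lift t (Suc k))) (Arr M s) (Suc n)"
    by (rule tj_mtj.tlam) (use tlam in auto)
  then show ?case by simp
next
  case (tapp G t A n1 H u B n2 L r s n3 P)
  have "tj (cins k {#} G \<oplus> cins k {#} H \<oplus> ctl (cins (Suc k) {#} L))
          (JApp (dB_lift t k) (dB_lift u k) (dB_lift r (Suc k))) s (Suc (n1 + n2 + n3))"
    by (rule tj_mtj.tapp) (use tapp in auto)
  then show ?case by simp
next
  case (mnil t)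
  then show ?case by (simp add: tj_mtj.mnil)
next
  case (mcons G t s n H A m)
  then show ?case by (simp add: tj_mtj.mcons)
qed

lemma mtj_unlift_prop:
  assumes "mtj G x A n" "\<And>G s n. tj G x s n \<Longrightarrow> G k = {#} \<and> tj (cdel k G) y s n"
  shows "G k = {#} \<and> mtj (cdel k G) y A n"
  using assms
proof (induction rule: mtj_induct)
  case nil then show ?case by (simp add: cz_apply[of k] tj_mtj.mnil)
next
  case (cons G s n H A m)
  then show ?case by (simp add: ctx_plus_apply[of _ _ k] tj_mtj.mcons)
qed

lemma tj_unlift: "tj G (dB_lift t k) s n \<Longrightarrow> G k = {#} \<and> tj (cdel k G) t s n"
proof (induction t arbitrary: k G s n)
  case (Var i)
  show ?case
  proof (cases "i < k")
    case True
    then have "tj G (Var i) s n" using Var by simp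
    then show ?thesis using True by (auto elim!: tj_VarE simp: csing_apply[of _ _ k] cdel_csing intro: tvar1)
  next
    case False
    then have "tj G (Var (Suc i)) s n" using Var by simp
    then show ?thesis using False by (auto elim!: tj_VarE simp: csing_apply[of _ _ k] cdel_csing intro: tvar1)
  qed
next
  case (Lam t)
  from Lam.prems have "tj G (Lam (dB_lift t (Suc k))) s n" by simp
  then obtain G0 s' n0 M where 1: "G = ctl G0" "s = Arr M s'" "n = Suc n0" "tj G0 (dB_lift t (Suc k)) s' n0" "G0 0 \<subseteq># M"
    by (auto elim: tj_LamE)
  show ?case
  proof -
    note 1
    then have ih: "G0 (Suc k) = {#}" "tj (cdel (Suc k) G0) t s' n0" using Lam.IH by blast+
    have "tj (ctl (cdel (Suc k) G0)) (Lam t) (Arr M s') (Suc n0)"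
      by (rule tj_mtj.tlam) (use ih 1 in auto)
    then show ?thesis using 1 ih by (simp add: ctl_apply[of _ k])
  qed
next
  case (JApp t1 t2 t3)
  from JApp.prems have "tj G (JApp (dB_lift t1 k) (dB_lift t2 k) (dB_lift t3 (Suc k))) s n" by simp
  then obtain G1 A n1 H1 B n2 L n3 P where 1: "G = G1 \<oplus> H1 \<oplus> ctl L" "n = Suc (n1 + n2 + n3)"
    "mtj G1 (dB_lift t1 k) A n1" "A \<noteq> {#}" "mtj H1 (dB_lift t2 k) B n2" "B \<noteq> {#}" "tj L (dB_lift t3 (Suc k)) s n3" "arrs P \<subseteq># A"
    "L 0 \<subseteq># image_mset snd P" "sum_mset (image_mset fst P) \<subseteq># B"
    by (auto elim: tj_JAppE)
  show ?case
  proof -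
    note 1
    have a: "G1 k = {#} \<and> mtj (cdel k G1) t1 A n1"
      by (rule mtj_unlift_prop[OF 1(3)]) (use JApp.IH(1) in blast)
    have b: "H1 k = {#} \<and> mtj (cdel k H1) t2 B n2"
      by (rule mtj_unlift_prop[OF 1(5)]) (use JApp.IH(2) in blast)
    have c: "L (Suc k) = {#}" "tj (cdel (Suc k) L) t3 s n3" using JApp.IH(3) 1(7) by blast+
    have "tj (cdel k G1 \<oplus> cdel k H1 \<oplus> ctl (cdel (Suc k) L)) (JApp t1 t2 t3) s (Suc (n1 + n2 + n3))"
      by (rule tj_mtj.tapp) (use a b c 1 in auto)
    then show ?thesis using 1 a b c by (simp add: ctx_plus_apply[of _ _ k] ctl_apply[of _ k])
  qed
qed

lemma mtj_unlift: "mtj G (dB_lift t k) A n \<Longrightarrow> G k = {#} \<and> mtj (cdel k G) t A n"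
  using mtj_unlift_prop[of G "dB_lift t k" A n k t] tj_unlift by blast

section \<open>Substitution\<close>

lemma mtj_subst_prop:
  assumes "mtj G x A n" "mtj D u (G k) m"
    "\<And>G s n D m. tj G x s n \<Longrightarrow> mtj D u (G k) m \<Longrightarrow> \<exists>n'. tj (cdel k G \<oplus> D) y s n' \<and> n' \<le> n + m"
  shows "\<exists>n'. mtj (cdel k G \<oplus> D) y A n' \<and> n' \<le> n + m"
  using assms
proof (induction arbitrary: D m rule: mtj_induct)
  case nil
  then have "D = cz" "m = 0" using mtj_emptyD by (auto simp: cz_apply[of k])
  then show ?case by (auto intro: tj_mtj.mnil)
next
  case (cons G s n H A m' D m)
  from cons.prems(1) have "mtj D u (G k + H k) m" by (simp add: ctx_plus_apply[of _ _ k])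
  then obtain D1 D2 m1 m2 where d: "mtj D1 u (G k) m1" "mtj D2 u (H k) m2" "D = D1 \<oplus> D2" "m = m1 + m2"
    using mtj_split by blast
  obtain n1 where n1: "tj (cdel k G \<oplus> D1) y s n1" "n1 \<le> n + m1" using cons.prems(2) cons.hyps(1) d(1) by blast
  obtain n2 where n2: "mtj (cdel k H \<oplus> D2) y A n2" "n2 \<le> m' + m2" using cons.IH d(2) cons.prems(2) by blast
  have "mtj ((cdel k G \<oplus> D1) \<oplus> (cdel k H \<oplus> D2)) y (add_mset s A) (n1 + n2)"
    using tj_mtj.mcons[OF n1(1) n2(1)] .
  then show ?case using d n1 n2 by (rule_tac x="n1 + n2" in exI) (simp add: cadd_ac)
qed

lemma tj_subst: "tj G t s n \<Longrightarrow> mtj D u (G k) m \<Longrightarrow> \<exists>n'. tj (cdel k G \<oplus> D) (dB_subst t k u) s n' \<and> n' \<le> n + m"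
proof (induction t arbitrary: G s n k u D m)
  case (Var i)
  from Var(1) have G: "G = csing i s" "n = 1" by (auto elim: tj_VarE)
  show ?case
  proof (cases "i = k")
    case True
    then have "tj D u s m" using Var(2) G by (simp add: csing_apply[of _ _ k] mtj_single_D)
    then show ?thesis using True G by auto
  next
    case False
    then have "D = cz" "m = 0" using Var(2) G mtj_emptyD by (auto simp: csing_apply[of _ _ k])
    then show ?thesis using False G by (auto simp: cdel_csing intro: tvar1)
  qed
next
  case (Lam t)
  from Lam.prems(1) obtain G0 s' n0 M where 1: "G = ctl G0" "s = Arr M s'" "n = Suc n0" "tj G0 t s' n0" "G0 0 \<subseteq># M"
    by (auto elim: tj_LamE)
  show ?case
  proof -
    note 1
    have "mtj (cins 0 {#} D) (dB_lift u 0) (G0 (Suc k)) m"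
      using tj_lift(2)[OF Lam.prems(2), of 0] 1 by (simp add: ctl_apply)
    then obtain n' where n': "tj (cdel (Suc k) G0 \<oplus> cins 0 {#} D) (dB_subst t (Suc k) (dB_lift u 0)) s' n'" "n' \<le> n0 + m"
      using Lam.IH 1 by blast
    have "tj (ctl (cdel (Suc k) G0 \<oplus> cins 0 {#} D)) (Lam (dB_subst t (Suc k) (dB_lift u 0))) (Arr M s') (Suc n')"
      by (rule tj_mtj.tlam) (use n' 1 in auto)
    then show ?thesis using 1 n' by (rule_tac x="Suc n'" in exI) simp
  qed
next
  case (JApp t1 t2 t3)
  from JApp.prems(1) obtain G1 A n1 H1 B n2 L n3 P where 1: "G = G1 \<oplus> H1 \<oplus> ctl L" "n = Suc (n1 + n2 + n3)"
    "mtj G1 t1 A n1" "A \<noteq> {#}" "mtj H1 t2 B n2" "B \<noteq> {#}" "tj L t3 s n3" "arrs P \<subseteq># A"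
    "L 0 \<subseteq># image_mset snd P" "sum_mset (image_mset fst P) \<subseteq># B"
    by (auto elim: tj_JAppE)
  show ?case
  proof -
    note 1
    from JApp.prems(2) 1 have "mtj D u (G1 k + H1 k + L (Suc k)) m" by (simp add: ctx_plus_apply[of _ _ k] ctl_apply[of _ k])
    then obtain D12 D3 m12 m3 where d: "mtj D12 u (G1 k + H1 k) m12" "mtj D3 u (L (Suc k)) m3" "D = D12 \<oplus> D3" "m = m12 + m3"
      using mtj_split by blast
    then obtain D1 D2 m1 m2 where d2: "mtj D1 u (G1 k) m1" "mtj D2 u (H1 k) m2" "D12 = D1 \<oplus> D2" "m12 = m1 + m2"
      using mtj_split by blast
    obtain k1 where k1: "mtj (cdel k G1 \<oplus> D1) (dB_subst t1 k u) A k1" "k1 \<le> n1 + m1"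
      using mtj_subst_prop[OF 1(3) d2(1)] JApp.IH(1) by blast
    obtain k2 where k2: "mtj (cdel k H1 \<oplus> D2) (dB_subst t2 k u) B k2" "k2 \<le> n2 + m2"
      using mtj_subst_prop[OF 1(5) d2(2)] JApp.IH(2) by blast
    have "mtj (cins 0 {#} D3) (dB_lift u 0) (L (Suc k)) m3"
      using tj_lift(2)[OF d(2), of 0] by simp
    then obtain k3 where k3: "tj (cdel (Suc k) L \<oplus> cins 0 {#} D3) (dB_subst t3 (Suc k) (dB_lift u 0)) s k3" "k3 \<le> n3 + m3"
      using JApp.IH(3) 1(7) by blast
    have "tj ((cdel k G1 \<oplus> D1) \<oplus> (cdel k H1 \<oplus> D2) \<oplus> ctl (cdel (Suc k) L \<oplus> cins 0 {#} D3))
            (JApp (dB_subst t1 k u) (dB_subst t2 k u) (dB_subst t3 (Suc k) (dB_lift u 0))) s (Suc (k1 + k2 + k3))"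
      by (rule tj_mtj.tapp[OF k1(1) 1(4) k2(1) 1(6) k3(1) 1(8)]) (use 1 in auto)
    then show ?thesis using 1 d d2 k1 k2 k3
      by (rule_tac x="Suc (k1 + k2 + k3)" in exI) (simp add: cadd_ac)
  qed
qed

lemma mtj_subst: "mtj G t A n \<Longrightarrow> mtj D u (G k) m \<Longrightarrow> \<exists>n'. mtj (cdel k G \<oplus> D) (dB_subst t k u) A n' \<and> n' \<le> n + m"
  using mtj_subst_prop[of G t A n D u k m "dB_subst t k u"] tj_subst by blast

section \<open>Anti-substitution\<close>

lemma mtj_anti_prop:
  assumes "mtj G x A n"
    "\<And>G s n. tj G x s n \<Longrightarrow> \<exists>G' D n1 m. tj G' y s n1 \<and> mtj D u (G' k) m \<and> G = cdel k G' \<oplus> D"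
  shows "\<exists>G' D n1 m. mtj G' y A n1 \<and> mtj D u (G' k) m \<and> G = cdel k G' \<oplus> D"
  using assms
proof (induction rule: mtj_induct)
  case nil
  have "cz k = {#}" by (simp add: cz_def)
  then show ?case using tj_mtj.mnil[of y] tj_mtj.mnil[of u] by (rule_tac x=cz in exI, rule_tac x=cz in exI) auto
next
  case (cons G s n H A m)
  obtain G1 D1 n1 m1 where a: "tj G1 y s n1" "mtj D1 u (G1 k) m1" "G = cdel k G1 \<oplus> D1"
    using cons.prems cons.hyps(1) by blast
  obtain G2 D2 n2 m2 where b: "mtj G2 y A n2" "mtj D2 u (G2 k) m2" "H = cdel k G2 \<oplus> D2"
    using cons.IH cons.prems by blast
  have "mtj (G1 \<oplus> G2) y (add_mset s A) (n1 + n2)" using a b by (simp add: tj_mtj.mcons)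
  moreover have "mtj (D1 \<oplus> D2) u ((G1 \<oplus> G2) k) (m1 + m2)" using mtj_add[OF a(2) b(2)] by (simp add: ctx_plus_apply[of _ _ k])
  moreover have "G \<oplus> H = cdel k (G1 \<oplus> G2) \<oplus> (D1 \<oplus> D2)" using a b by (simp add: cadd_ac)
  ultimately show ?case by blast
qed

lemma tj_antisubst: "tj G (dB_subst t k u) s n \<Longrightarrow> \<exists>G' D n1 m. tj G' t s n1 \<and> mtj D u (G' k) m \<and> G = cdel k G' \<oplus> D"
proof (induction t arbitrary: G s n k u)
  case (Var i)
  consider "k < i" | "i = k" | "i < k" by arith
  then show ?case
  proof cases
    case 1
    then have "tj G (Var (i - 1)) s n" using Var by simp
    then have "G = csing (i - 1) s" by (auto elim: tj_VarE)
    then show ?thesis using 1 tj_mtj.tvar[of i s] tj_mtj.mnil[of u]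
      by (rule_tac x="csing i s" in exI, rule_tac x=cz in exI) (auto simp: csing_apply[of _ _ k] cdel_csing)
  next
    case 2
    then have "tj G u s n" using Var by simp
    then show ?thesis using 2 tj_mtj.tvar[of i s]
      by (rule_tac x="csing i s" in exI, rule_tac x=G in exI) (auto simp: csing_apply[of _ _ k] intro: mtj_single)
  next
    case 3
    then have "tj G (Var i) s n" using Var by simp
    then have "G = csing i s" by (auto elim: tj_VarE)
    then show ?thesis using 3 tj_mtj.tvar[of i s] tj_mtj.mnil[of u]
      by (rule_tac x="csing i s" in exI, rule_tac x=cz in exI) (auto simp: csing_apply[of _ _ k] cdel_csing)
  qed
next
  case (Lam t)
  from Lam.prems have "tj G (Lam (dB_subst t (Suc k) (dB_lift u 0))) s n" by simp
  then obtain G0 s' n0 M where 1: "G = ctl G0" "s = Arr M s'" "n = Suc n0" "tj G0 (dB_subst t (Suc k) (dB_lift u 0)) s' n0" "G0 0 \<subseteq># M"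
    by (auto elim: tj_LamE)
  show ?case
  proof -
    note 1
    then obtain G0' D0 n1 m where h: "tj G0' t s' n1" "mtj D0 (dB_lift u 0) (G0' (Suc k)) m" "G0 = cdel (Suc k) G0' \<oplus> D0"
      using Lam.IH by blast
    have u: "D0 0 = {#}" "mtj (cdel 0 D0) u (G0' (Suc k)) m" using mtj_unlift[OF h(2)] by auto
    have "tj (ctl G0') (Lam t) (Arr M s') (Suc n1)"
      by (rule tj_mtj.tlam[OF h(1)]) (use 1 h u in auto)
    moreover have "G = cdel k (ctl G0') \<oplus> cdel 0 D0" using 1 h by (simp add: cdel0_ctl)
    ultimately show ?thesis using u 1 by (rule_tac x="ctl G0'" in exI) (auto simp: ctl_apply[of _ k])
  qed
next
  case (JApp t1 t2 t3)
  from JApp.prems have "tj G (JApp (dB_subst t1 k u) (dB_subst t2 k u) (dB_subst t3 (Suc k) (dB_lift u 0))) s n" by simp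
  then obtain G1 A n1 H1 B n2 L n3 P where 1: "G = G1 \<oplus> H1 \<oplus> ctl L" "n = Suc (n1 + n2 + n3)"
    "mtj G1 (dB_subst t1 k u) A n1" "A \<noteq> {#}" "mtj H1 (dB_subst t2 k u) B n2" "B \<noteq> {#}" "tj L (dB_subst t3 (Suc k) (dB_lift u 0)) s n3" "arrs P \<subseteq># A"
    "L 0 \<subseteq># image_mset snd P" "sum_mset (image_mset fst P) \<subseteq># B"
    by (auto elim: tj_JAppE)
  show ?case
  proof -
    note 1
    obtain G1' D1 k1 m1 where a: "mtj G1' t1 A k1" "mtj D1 u (G1' k) m1" "G1 = cdel k G1' \<oplus> D1"
      using mtj_anti_prop[OF 1(3)] JApp.IH(1) by blast
    obtain H1' D2 k2 m2 where b: "mtj H1' t2 B k2" "mtj D2 u (H1' k) m2" "H1 = cdel k H1' \<oplus> D2"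
      using mtj_anti_prop[OF 1(5)] JApp.IH(2) by blast
    obtain L' D3 k3 m3 where c: "tj L' t3 s k3" "mtj D3 (dB_lift u 0) (L' (Suc k)) m3" "L = cdel (Suc k) L' \<oplus> D3"
      using JApp.IH(3) 1(7) by blast
    have u: "D3 0 = {#}" "mtj (cdel 0 D3) u (L' (Suc k)) m3" using mtj_unlift[OF c(2)] by auto
    have "tj (G1' \<oplus> H1' \<oplus> ctl L') (JApp t1 t2 t3) s (Suc (k1 + k2 + k3))"
      by (rule tj_mtj.tapp[OF a(1) 1(4) b(1) 1(6) c(1) 1(8)]) (use 1 c u in auto)
    moreover have "mtj (D1 \<oplus> D2 \<oplus> cdel 0 D3) u ((G1' \<oplus> H1' \<oplus> ctl L') k) (m1 + m2 + m3)"
      using mtj_add[OF mtj_add[OF a(2) b(2)] u(2)] by (simp add: ctx_plus_apply[of _ _ k] ctl_apply[of _ k])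
    moreover have "G = cdel k (G1' \<oplus> H1' \<oplus> ctl L') \<oplus> (D1 \<oplus> D2 \<oplus> cdel 0 D3)"
      using 1 a b c by (simp add: cdel0_ctl cadd_ac)
    ultimately show ?thesis by blast
  qed
qed

lemma mtj_antisubst: "mtj G (dB_subst t k u) A n \<Longrightarrow> \<exists>G' D n1 m. mtj G' t A n1 \<and> mtj D u (G' k) m \<and> G = cdel k G' \<oplus> D"
  using mtj_anti_prop[of G "dB_subst t k u" A n t u k] tj_antisubst by blast



section \<open>Subject reduction\<close>

lemma sub_image: "N \<subseteq># image_mset f P \<Longrightarrow> \<exists>P'. P' \<subseteq># P \<and> image_mset f P' = N"
proof (induction P arbitrary: N)
  case empty then show ?case by auto
next
  case (add x P)
  show ?case
  proof (cases "f x \<in># N")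
    case True
    then have "N - {#f x#} \<subseteq># image_mset f P" using add.prems
      by (simp add: subset_eq_diff_conv)
    then obtain P0 where "P0 \<subseteq># P" "image_mset f P0 = N - {#f x#}" using add.IH by blast
    then show ?thesis using True
      by (rule_tac x="add_mset x P0" in exI) (auto simp: insert_DiffM)
  next
    case False
    have "count N a \<le> count (image_mset f P) a" for a
    proof (cases "a = f x")
      case True then have "count N a = 0" using False by (simp add: count_eq_zero_iff)
      then show ?thesis by simp
    next
      case F: False
      have "count N a \<le> count (image_mset f (add_mset x P)) a" using add.prems by (simp add: subseteq_mset_def)
      then show ?thesis using F by simp
    qed
    then have "N \<subseteq># image_mset f P" by (simp add: subseteq_mset_def)
    then obtain P0 where "P0 \<subseteq># P" "image_mset f P0 = N" using add.IH by blast
    moreover have "P \<subseteq># add_mset x P" by simp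
    ultimately have "P0 \<subseteq># add_mset x P" by (meson subset_mset.order_trans)
    then show ?thesis using \<open>image_mset f P0 = N\<close> by blast
  qed
qed

lemma sum_image_mono: "P' \<subseteq># P \<Longrightarrow> sum_mset (image_mset f P') \<subseteq># sum_mset (image_mset f P)"
proof -
  assume "P' \<subseteq># P"
  then obtain Q where "P = P' + Q" by (metis subset_mset.add_diff_inverse)
  then show ?thesis by simp
qed

lemma contrD_Nil: "contrD [] t u = dB_subst t 0 u"
  by (simp add: contrD_def dB_liftn_def)

lemma contrD_Cons: "contrD ((a, b) # D) t u = JApp a b (contrD D t (dB_lift u 0))"
  by (simp add: contrD_def dB_liftn_def funpow_Suc_right del: funpow.simps)

lemma arrs_add[simp]: "arrs (add_mset x P) = add_mset (Arr (fst x) (snd x)) (arrs P)"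
  by (simp add: arrs_def)
lemma arrs_empty[simp]: "arrs {#} = {#}" by (simp add: arrs_def)

lemma cle_cz[simp]: "cle cz G" by (simp add: cle_def cz_def)

lemma tj_F: "tj G (plugD D (Lam t)) (Arr M s) n \<Longrightarrow> mtj H u M m \<Longrightarrow>
  \<exists>G' n'. tj G' (contrD D t u) s n' \<and> n' \<le> n + m \<and> cle G' (G \<oplus> H)"
proof (induction D arbitrary: G n u H m)
  case Nil
  from Nil.prems(1) obtain G0 n0 where 1: "G = ctl G0" "n = Suc n0" "tj G0 t s n0" "G0 0 \<subseteq># M"
    by (auto elim: tj_LamE)
  obtain H1 H2 m1 m2 where h: "mtj H1 u (G0 0) m1" "H = H1 \<oplus> H2" "m = m1 + m2"
    using mtj_sub[OF Nil.prems(2) 1(4)] by blast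
  obtain n' where n': "tj (cdel 0 G0 \<oplus> H1) (dB_subst t 0 u) s n'" "n' \<le> n0 + m1"
    using tj_subst[OF 1(3), of H1 u 0 m1] h(1) by blast
  have "cle (ctl G0 \<oplus> H1) (ctl G0 \<oplus> (H1 \<oplus> H2))" by (rule cle_plus) auto
  then show ?case using n' 1 h by (rule_tac x="cdel 0 G0 \<oplus> H1" in exI) (auto simp: contrD_Nil cdel0_ctl)
next
  case (Cons p D)
  obtain a b where p: "p = (a, b)" by (cases p)
  from Cons.prems(1) p obtain G1 A n1 H1 B n2 L n3 P where 1: "G = G1 \<oplus> H1 \<oplus> ctl L" "n = Suc (n1 + n2 + n3)"
    "mtj G1 a A n1" "A \<noteq> {#}" "mtj H1 b B n2" "B \<noteq> {#}" "tj L (plugD D (Lam t)) (Arr M s) n3" "arrs P \<subseteq># A"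
    "L 0 \<subseteq># image_mset snd P" "sum_mset (image_mset fst P) \<subseteq># B"
    by (auto elim: tj_JAppE)
  have "mtj (cins 0 {#} H) (dB_lift u 0) M m" using tj_lift(2)[OF Cons.prems(2), of 0] by simp
  then obtain L' n3' where l: "tj L' (contrD D t (dB_lift u 0)) s n3'" "n3' \<le> n3 + m" "cle L' (L \<oplus> cins 0 {#} H)"
    using Cons.IH 1(7) by blast
  have "L' 0 \<subseteq># L 0" using l(3) by (auto simp: cle_def dest: spec[of _ 0])
  then have "tj (G1 \<oplus> H1 \<oplus> ctl L') (JApp a b (contrD D t (dB_lift u 0))) s (Suc (n1 + n2 + n3'))"
    using 1 by (intro tj_mtj.tapp[OF 1(3) 1(4) 1(5) 1(6) l(1) 1(8)]) (auto intro: subset_mset.order_trans)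
  moreover have "cle (G1 \<oplus> H1 \<oplus> ctl L') (G1 \<oplus> H1 \<oplus> ctl L \<oplus> H)"
  proof -
    have "cle (ctl L') (ctl L \<oplus> H)" using cle_ctl[OF l(3)] by simp
    then have "cle (G1 \<oplus> H1 \<oplus> ctl L') (G1 \<oplus> H1 \<oplus> (ctl L \<oplus> H))" by (rule cle_plus[OF cle_refl])
    then show ?thesis by (simp add: cadd_assoc)
  qed
  ultimately show ?case using 1 l p by (rule_tac x="G1 \<oplus> H1 \<oplus> ctl L'" in exI) (auto simp: contrD_Cons)
qed

lemma mtj_F: "mtj G (plugD D (Lam t)) (arrs P) n \<Longrightarrow> mtj H u (sum_mset (image_mset fst P)) m \<Longrightarrow>
  \<exists>G' n'. mtj G' (contrD D t u) (image_mset snd P) n' \<and> n' \<le> n + m \<and> cle G' (G \<oplus> H)"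
proof (induction P arbitrary: G n H m)
  case empty
  then show ?case using tj_mtj.mnil by (rule_tac x=cz in exI) auto
next
  case (add x P)
  obtain M s where x: "x = (M, s)" by (cases x)
  obtain G1 G2 n1 n2 where g: "tj G1 (plugD D (Lam t)) (Arr M s) n1" "mtj G2 (plugD D (Lam t)) (arrs P) n2"
    "G = G1 \<oplus> G2" "n = n1 + n2"
    using mtj_elem[OF add.prems(1), of "Arr M s"] x by auto
  have "mtj H u (M + sum_mset (image_mset fst P)) m" using add.prems(2) x by simp
  then obtain H1 H2 m1 m2 where h: "mtj H1 u M m1" "mtj H2 u (sum_mset (image_mset fst P)) m2" "H = H1 \<oplus> H2" "m = m1 + m2"
    using mtj_split by blast
  obtain G1' k1 where a: "tj G1' (contrD D t u) s k1" "k1 \<le> n1 + m1" "cle G1' (G1 \<oplus> H1)"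
    using tj_F[OF g(1) h(1)] by blast
  obtain G2' k2 where b: "mtj G2' (contrD D t u) (image_mset snd P) k2" "k2 \<le> n2 + m2" "cle G2' (G2 \<oplus> H2)"
    using add.IH[OF g(2) h(2)] by blast
  have "mtj (G1' \<oplus> G2') (contrD D t u) (add_mset s (image_mset snd P)) (k1 + k2)"
    using tj_mtj.mcons[OF a(1) b(1)] .
  moreover have "cle (G1' \<oplus> G2') (G \<oplus> H)"
    using cle_plus[OF a(3) b(3)] g h by (simp add: cadd_ac)
  ultimately show ?case using a b g h x by (rule_tac x="G1' \<oplus> G2'" in exI) auto
qed

lemma mtj_SR_prop:
  assumes "mtj G x A n" "\<And>G s n. tj G x s n \<Longrightarrow> \<exists>G' n'. tj G' y s n' \<and> n' < n \<and> cle G' G"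
  shows "\<exists>G' n'. mtj G' y A n' \<and> n' \<le> n \<and> (A \<noteq> {#} \<longrightarrow> n' < n) \<and> cle G' G"
  using assms
proof (induction rule: mtj_induct)
  case nil then show ?case using tj_mtj.mnil by (rule_tac x=cz in exI) auto
next
  case (cons G s n H A m)
  obtain G1 n1 where a: "tj G1 y s n1" "n1 < n" "cle G1 G" using cons.prems cons.hyps(1) by blast
  obtain G2 n2 where b: "mtj G2 y A n2" "n2 \<le> m" "cle G2 H" using cons.IH cons.prems by blast
  show ?case using tj_mtj.mcons[OF a(1) b(1)] a b cle_plus[OF a(3) b(3)]
    by (rule_tac x="G1 \<oplus> G2" in exI) auto
qed

lemma tj_SR: "dbeta t t' \<Longrightarrow> tj G t s n \<Longrightarrow> \<exists>G' n'. tj G' t' s n' \<and> n' < n \<and> cle G' G"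
proof (induction arbitrary: G s n rule: dbeta.induct)
  case (root D t u r)
  from root obtain G1 A n1 H1 B n2 L n3 P where 1: "G = G1 \<oplus> H1 \<oplus> ctl L" "n = Suc (n1 + n2 + n3)"
    "mtj G1 (plugD D (Lam t)) A n1" "A \<noteq> {#}" "mtj H1 u B n2" "B \<noteq> {#}" "tj L r s n3" "arrs P \<subseteq># A"
    "L 0 \<subseteq># image_mset snd P" "sum_mset (image_mset fst P) \<subseteq># B"
    by (auto elim: tj_JAppE)
  obtain P' where p: "P' \<subseteq># P" "image_mset snd P' = L 0" using sub_image[OF 1(9)] by blast
  have "arrs P' \<subseteq># A" using p(1) 1(8) unfolding arrs_def
    by (meson image_mset_subseteq_mono subset_mset.order_trans)
  then obtain Ga Gb na nb where a: "mtj Ga (plugD D (Lam t)) (arrs P') na" "G1 = Ga \<oplus> Gb" "n1 = na + nb"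
    using mtj_sub[OF 1(3)] by blast
  have "sum_mset (image_mset fst P') \<subseteq># B" using sum_image_mono[OF p(1)] 1(10)
    by (meson subset_mset.order_trans)
  then obtain Ha Hb ma mb where b: "mtj Ha u (sum_mset (image_mset fst P')) ma" "H1 = Ha \<oplus> Hb" "n2 = ma + mb"
    using mtj_sub[OF 1(5)] by blast
  obtain G' n' where c: "mtj G' (contrD D t u) (L 0) n'" "n' \<le> na + ma" "cle G' (Ga \<oplus> Ha)"
    using mtj_F[OF a(1) b(1)] p(2) by auto
  obtain n'' where d: "tj (cdel 0 L \<oplus> G') (dB_subst r 0 (contrD D t u)) s n''" "n'' \<le> n3 + n'"
    using tj_subst[OF 1(7) c(1)] by blast
  have "cle (cdel 0 L \<oplus> G') G"
  proof -
    have "cle (Ga \<oplus> Ha) (G1 \<oplus> H1)" using a(2) b(2) cle_plus[OF cle_plus_right cle_plus_right] by blast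
    then have "cle G' (G1 \<oplus> H1)" using c(3) cle_trans by blast
    then have "cle (ctl L \<oplus> G') (ctl L \<oplus> (G1 \<oplus> H1))" by (rule cle_plus[OF cle_refl])
    then show ?thesis using 1(1) by (simp add: cdel0_ctl cadd_ac)
  qed
  then show ?case using d c a b 1 by (rule_tac x="cdel 0 L \<oplus> G'" in exI) auto
next
  case (lam t t')
  from lam.prems obtain G0 s' n0 M where 1: "G = ctl G0" "s = Arr M s'" "n = Suc n0" "tj G0 t s' n0" "G0 0 \<subseteq># M"
    by (auto elim: tj_LamE)
  obtain G0' n0' where h: "tj G0' t' s' n0'" "n0' < n0" "cle G0' G0" using lam.IH 1(4) by blast
  have "G0' 0 \<subseteq># M" using h(3) 1(5) by (meson cle_def subset_mset.order_trans)
  then have "tj (ctl G0') (Lam t') (Arr M s') (Suc n0')" using h(1) by (rule_tac tj_mtj.tlam)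
  then show ?case using h 1 cle_ctl by (rule_tac x="ctl G0'" in exI) auto
next
  case (app1 t t' u r)
  from app1.prems obtain G1 A n1 H1 B n2 L n3 P where 1: "G = G1 \<oplus> H1 \<oplus> ctl L" "n = Suc (n1 + n2 + n3)"
    "mtj G1 t A n1" "A \<noteq> {#}" "mtj H1 u B n2" "B \<noteq> {#}" "tj L r s n3" "arrs P \<subseteq># A"
    "L 0 \<subseteq># image_mset snd P" "sum_mset (image_mset fst P) \<subseteq># B"
    by (auto elim: tj_JAppE)
  obtain G1' n1' where h: "mtj G1' t' A n1'" "n1' < n1" "cle G1' G1"
    using mtj_SR_prop[OF 1(3)] app1.IH 1(4) by blast
  have "tj (G1' \<oplus> H1 \<oplus> ctl L) (JApp t' u r) s (Suc (n1' + n2 + n3))"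
    by (rule tj_mtj.tapp[OF h(1) 1(4-10)])
  then show ?case using h 1 by (rule_tac x="G1' \<oplus> H1 \<oplus> ctl L" in exI) (auto intro!: cle_plus)
next
  case (app2 u u' t r)
  from app2.prems obtain G1 A n1 H1 B n2 L n3 P where 1: "G = G1 \<oplus> H1 \<oplus> ctl L" "n = Suc (n1 + n2 + n3)"
    "mtj G1 t A n1" "A \<noteq> {#}" "mtj H1 u B n2" "B \<noteq> {#}" "tj L r s n3" "arrs P \<subseteq># A"
    "L 0 \<subseteq># image_mset snd P" "sum_mset (image_mset fst P) \<subseteq># B"
    by (auto elim: tj_JAppE)
  obtain H1' n2' where h: "mtj H1' u' B n2'" "n2' < n2" "cle H1' H1"
    using mtj_SR_prop[OF 1(5)] app2.IH 1(6) by blast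
  have "tj (G1 \<oplus> H1' \<oplus> ctl L) (JApp t u' r) s (Suc (n1 + n2' + n3))"
    by (rule tj_mtj.tapp[OF 1(3) 1(4) h(1) 1(6-10)])
  then show ?case using h 1 by (rule_tac x="G1 \<oplus> H1' \<oplus> ctl L" in exI) (auto intro!: cle_plus)
next
  case (app3 r r' t u)
  from app3.prems obtain G1 A n1 H1 B n2 L n3 P where 1: "G = G1 \<oplus> H1 \<oplus> ctl L" "n = Suc (n1 + n2 + n3)"
    "mtj G1 t A n1" "A \<noteq> {#}" "mtj H1 u B n2" "B \<noteq> {#}" "tj L r s n3" "arrs P \<subseteq># A"
    "L 0 \<subseteq># image_mset snd P" "sum_mset (image_mset fst P) \<subseteq># B"
    by (auto elim: tj_JAppE)
  obtain L' n3' where h: "tj L' r' s n3'" "n3' < n3" "cle L' L" using app3.IH 1(7) by blast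
  have "L' 0 \<subseteq># image_mset snd P" using h(3) 1(9) by (meson cle_def subset_mset.order_trans)
  then have "tj (G1 \<oplus> H1 \<oplus> ctl L') (JApp t u r') s (Suc (n1 + n2 + n3'))"
    by (rule tj_mtj.tapp[OF 1(3-6) h(1) 1(8) _ 1(10)])
  then show ?case using h 1 by (rule_tac x="G1 \<oplus> H1 \<oplus> ctl L'" in exI) (auto intro!: cle_plus cle_ctl)
qed

lemma tj_SN: "tj G t s n \<Longrightarrow> SN_dbeta t"
  unfolding SN_dbeta_def
proof
  assume t: "tj G t s n" and "\<exists>f. f 0 = t \<and> (\<forall>i. dbeta (f i) (f (Suc i)))"
  then obtain f where f: "f 0 = t" "\<forall>i. dbeta (f i) (f (Suc i))" by blast
  have "\<exists>G' n'. tj G' (f i) s n' \<and> n' + i \<le> n" for i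
  proof (induction i)
    case 0 then show ?case using t f by auto
  next
    case (Suc i)
    then obtain G' n' where a: "tj G' (f i) s n'" "n' + i \<le> n" by blast
    obtain G'' n'' where "tj G'' (f (Suc i)) s n''" "n'' < n'" using tj_SR[OF _ a(1)] f(2) by blast
    then show ?case using a(2) by (rule_tac x=G'' in exI, rule_tac x=n'' in exI) auto
  qed
  then obtain G' n' where "tj G' (f (Suc n)) s n'" "n' + Suc n \<le> n" by blast
  then show False by auto
qed



section \<open>Typability of ISN\<close>

definition typable :: "trm \<Rightarrow> bool" where "typable t \<longleftrightarrow> (\<exists>G s n. tj G t s n)"

lemma tj_any_mtj: "(\<And>s. \<exists>G n. tj G t s n) \<Longrightarrow> \<exists>G n. mtj G t A n"
proof (induction A)
  case empty then show ?case using tj_mtj.mnil by blast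
next
  case (add x A)
  then obtain G n where "mtj G t A n" by blast
  moreover obtain G' n' where "tj G' t x n'" using add.prems by blast
  ultimately show ?case using tj_mtj.mcons by blast
qed

lemma tj_app_anyhead:
  assumes "\<And>s. \<exists>G n. tj G t s n" "typable u" "tj L r s n3"
  shows "\<exists>G n. tj G (JApp t u r) s n"
proof -
  define P where "P = image_mset (\<lambda>x. ({#}::ty multiset, x)) (L 0)"
  obtain G n1 where a: "mtj G t (arrs P + {#TB#}) n1" using tj_any_mtj assms(1) by blast
  obtain H su n2 where "tj H u su n2" using assms(2) unfolding typable_def by blast
  then have b: "mtj H u {#su#} n2" by (rule mtj_single)
  have e1: "image_mset snd P = L 0" by (simp add: P_def multiset.map_comp o_def)
  have e2: "sum_mset (image_mset fst P) = {#}" by (simp add: P_def multiset.map_comp o_def)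
  have "tj (G \<oplus> H \<oplus> ctl L) (JApp t u r) s (Suc (n1 + n2 + n3))"
    apply (rule tj_mtj.tapp[where P=P, OF a _ b _ assms(3)])
    apply (simp_all only: e1 e2)
    apply simp_all
    done
  then show ?thesis by blast
qed

lemma typable_JApp_parts:
  assumes "tj G (JApp t u r) s n"
  shows "typable t" "typable u" "\<exists>L n3. tj L r s n3"
proof -
  from assms obtain G1 A n1 H1 B n2 L n3 where 1: "mtj G1 t A n1" "A \<noteq> {#}" "mtj H1 u B n2" "B \<noteq> {#}" "tj L r s n3"
    by (auto elim: tj_JAppE)
  show "typable t" using mtj_typable[OF 1(1,2)] unfolding typable_def by blast
  show "typable u" using mtj_typable[OF 1(3,4)] unfolding typable_def by blast
  show "\<exists>L n3. tj L r s n3" using 1 by blast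
qed

lemma neutral_anytype: "neutral t \<Longrightarrow> typable t \<Longrightarrow> \<exists>G n. tj G t s n"
proof (induction t arbitrary: s rule: neutral.induct)
  case (1 i) then show ?case using tj_mtj.tvar by blast
next
  case (2 n n' u)
  then obtain G s0 k where "tj G (JApp n u n') s0 k" unfolding typable_def by blast
  then have tn: "typable n" "typable u" "\<exists>L n3. tj L n' s0 n3" using typable_JApp_parts by blast+
  then have "typable n'" unfolding typable_def by blast
  note tn
  then have "\<exists>G k. tj G n s' k" for s' using 2 by blast
  moreover obtain L k3 where "tj L n' s k3" using 2 \<open>typable n'\<close> by blast
  ultimately show ?case using tj_app_anyhead \<open>typable u\<close> by blast
qed

lemma lift_plugD: "dB_lift (plugD D t) k = plugD (liftD k D) (dB_lift t (k + length D))"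
  by (induction D arbitrary: k) auto

lemma anti_F: "tj G (contrD D s u) ty n \<Longrightarrow>
  \<exists>G' M H n1 m. tj G' (plugD D (Lam s)) (Arr M ty) n1 \<and> mtj H u M m \<and> G = G' \<oplus> H"
proof (induction D arbitrary: u G ty n)
  case Nil
  then have "tj G (dB_subst s 0 u) ty n" by (simp add: contrD_Nil)
  then obtain G0 H n1 m where h: "tj G0 s ty n1" "mtj H u (G0 0) m" "G = cdel 0 G0 \<oplus> H"
    using tj_antisubst by blast
  have "tj (ctl G0) (Lam s) (Arr (G0 0) ty) (Suc n1)" using h(1) by (rule tj_mtj.tlam) simp
  then show ?case using h by (auto simp: cdel0_ctl)
next
  case (Cons p D)
  obtain a b where p: "p = (a, b)" by (cases p)
  from Cons.prems p obtain G1 A n1 H1 B n2 L n3 P where 1: "G = G1 \<oplus> H1 \<oplus> ctl L" "n = Suc (n1 + n2 + n3)"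
    "mtj G1 a A n1" "A \<noteq> {#}" "mtj H1 b B n2" "B \<noteq> {#}" "tj L (contrD D s (dB_lift u 0)) ty n3" "arrs P \<subseteq># A"
    "L 0 \<subseteq># image_mset snd P" "sum_mset (image_mset fst P) \<subseteq># B"
    by (auto simp: contrD_Cons elim: tj_JAppE)
  obtain L1 M H n1' m where h: "tj L1 (plugD D (Lam s)) (Arr M ty) n1'" "mtj H (dB_lift u 0) M m" "L = L1 \<oplus> H"
    using Cons.IH[OF 1(7)] by blast
  have u: "H 0 = {#}" "mtj (cdel 0 H) u M m" using mtj_unlift[OF h(2)] by auto
  have "tj (G1 \<oplus> H1 \<oplus> ctl L1) (JApp a b (plugD D (Lam s))) (Arr M ty) (Suc (n1 + n2 + n1'))"
    by (rule tj_mtj.tapp[OF 1(3-6) h(1) 1(8)]) (use 1 h u in auto)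
  moreover have "G = (G1 \<oplus> H1 \<oplus> ctl L1) \<oplus> cdel 0 H" using 1 h by (simp add: cdel0_ctl cadd_ac)
  ultimately show ?case using u p by auto
qed

lemma mtj_anti_F: "mtj G (contrD D s u) N n \<Longrightarrow>
  \<exists>P G' H n1 m. mtj G' (plugD D (Lam s)) (arrs P) n1 \<and> mtj H u (sum_mset (image_mset fst P)) m \<and> image_mset snd P = N"
proof (induction rule: mtj_induct)
  case nil then show ?case using tj_mtj.mnil by (rule_tac x="{#}" in exI) auto
next
  case (cons G ty n H A m)
  obtain G1 M H1 n1 m1 where a: "tj G1 (plugD D (Lam s)) (Arr M ty) n1" "mtj H1 u M m1"
    using anti_F[OF cons.hyps(1)] by blast
  obtain P G2 H2 n2 m2 where b: "mtj G2 (plugD D (Lam s)) (arrs P) n2" "mtj H2 u (sum_mset (image_mset fst P)) m2"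
    "image_mset snd P = A" using cons.IH by blast
  have "mtj (G1 \<oplus> G2) (plugD D (Lam s)) (arrs (add_mset (M, ty) P)) (n1 + n2)"
    using tj_mtj.mcons[OF a(1) b(1)] by simp
  moreover have "mtj (H1 \<oplus> H2) u (sum_mset (image_mset fst (add_mset (M, ty) P))) (m1 + m2)"
    using mtj_add[OF a(2) b(2)] by simp
  ultimately show ?case using b(3) by (rule_tac x="add_mset (M, ty) P" in exI) auto
qed

lemma open_typable: "typable (open_body D s) \<Longrightarrow> typable (plugD D (Lam s))"
proof -
  assume "typable (open_body D s)"
  then obtain G ty n where "tj G (contrD (liftD 0 D) (dB_lift s (Suc (length D))) (Var 0)) ty n"
    unfolding typable_def open_body_def by blast
  then obtain G' M n1 where "tj G' (plugD (liftD 0 D) (Lam (dB_lift s (Suc (length D))))) (Arr M ty) n1"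
    using anti_F by blast
  moreover have "plugD (liftD 0 D) (Lam (dB_lift s (Suc (length D)))) = dB_lift (plugD D (Lam s)) 0"
    by (simp add: lift_plugD)
  ultimately have "tj G' (dB_lift (plugD D (Lam s)) 0) (Arr M ty) n1" by simp
  then show ?thesis using tj_unlift unfolding typable_def by blast
qed

lemma base_expand:
  assumes "tj G (dB_subst r 0 (contrD D s u)) ty n" "typable (plugD D (Lam s))" "typable u"
  shows "\<exists>G' n'. tj G' (JApp (plugD D (Lam s)) u r) ty n'"
proof -
  obtain L H n1 m where a: "tj L r ty n1" "mtj H (contrD D s u) (L 0) m"
    using tj_antisubst[OF assms(1)] by blast
  obtain P G' H' k1 k2 where b: "mtj G' (plugD D (Lam s)) (arrs P) k1" "mtj H' u (sum_mset (image_mset fst P)) k2"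
    "image_mset snd P = L 0"
    using mtj_anti_F[OF a(2)] by blast
  obtain G1 s1 n2 where c: "tj G1 (plugD D (Lam s)) s1 n2" using assms(2) unfolding typable_def by blast
  obtain H1 s2 m2 where d: "tj H1 u s2 m2" using assms(3) unfolding typable_def by blast
  have "tj ((G' \<oplus> G1) \<oplus> (H' \<oplus> H1) \<oplus> ctl L) (JApp (plugD D (Lam s)) u r) ty (Suc ((k1 + n2) + (k2 + m2) + n1))"
    by (rule tj_mtj.tapp[where P=P, OF mtj_add[OF b(1) mtj_single[OF c]] _ mtj_add[OF b(2) mtj_single[OF d]] _ a(1)])
       (use b in auto)
  then show ?thesis by blast
qed

lemma mtj_map_prop:
  assumes "mtj G x A n" "\<And>G s n. tj G x s n \<Longrightarrow> \<exists>G' n'. tj G' y s n'"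
  shows "\<exists>G' n'. mtj G' y A n'"
  using assms
proof (induction rule: mtj_induct)
  case nil then show ?case using tj_mtj.mnil by blast
next
  case (cons G s n H A m)
  then show ?case using tj_mtj.mcons by blast
qed

lemma W_expand:
  assumes "wh_ctx W" "\<And>G s n. tj G C s n \<Longrightarrow> \<exists>G' n'. tj G' R s n'" "tj G (plugW W C) s n"
  shows "\<exists>G' n'. tj G' (plugW W R) s n'"
  using assms
proof (induction W arbitrary: G s n)
  case WHole then show ?case by simp
next
  case (WLeft W a b)
  from WLeft.prems(3) obtain G1 A n1 H1 B n2 L n3 P where 1: "G = G1 \<oplus> H1 \<oplus> ctl L" "n = Suc (n1 + n2 + n3)"
    "mtj G1 (plugW W C) A n1" "A \<noteq> {#}" "mtj H1 a B n2" "B \<noteq> {#}" "tj L b s n3" "arrs P \<subseteq># A"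
    "L 0 \<subseteq># image_mset snd P" "sum_mset (image_mset fst P) \<subseteq># B"
    by (auto elim: tj_JAppE)
  have ih: "\<exists>G' n'. tj G' (plugW W R) s n'" if "tj G (plugW W C) s n" for G s n
    using WLeft.IH[of G s n] WLeft.prems(1,2) that by simp
  obtain G1' n1' where "mtj G1' (plugW W R) A n1'"
    using mtj_map_prop[OF 1(3), of "plugW W R"] ih by blast
  then have "tj (G1' \<oplus> H1 \<oplus> ctl L) (JApp (plugW W R) a b) s (Suc (n1' + n2 + n3))"
    by (rule tj_mtj.tapp[OF _ 1(4-10)])
  then show ?case by auto
next
  case (WRight n0 a W)
  then have nn: "neutral n0" "wh_ctx W" by auto
  from WRight.prems(3) have "tj G (JApp n0 a (plugW W C)) s n" by simp
  then have "typable n0" "typable a" "\<exists>L n3. tj L (plugW W C) s n3" using typable_JApp_parts by blast+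
  then obtain L n3 where "tj L (plugW W C) s n3" by blast
  then obtain L' n3' where "tj L' (plugW W R) s n3'" using WRight.IH nn(2) WRight.prems(2) by blast
  then show ?case using tj_app_anyhead neutral_anytype[OF nn(1) \<open>typable n0\<close>] \<open>typable a\<close> by simp
qed

lemma ISN_typable: "ISN t \<Longrightarrow> typable t \<and> (neutral t \<longrightarrow> (\<forall>s. \<exists>G n. tj G t s n))"
proof (induction rule: ISN.induct)
  case (snvar i)
  then show ?case unfolding typable_def using tj_mtj.tvar by blast
next
  case (snabs t)
  then obtain G s n where "tj G t s n" unfolding typable_def by blast
  then have "tj (ctl G) (Lam t) (Arr (G 0) s) (Suc n)" by (rule tj_mtj.tlam) simp
  then show ?case unfolding typable_def by (auto elim: neutral_LamE)
next
  case (snapp n u r)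
  have hn: "\<exists>G k. tj G n s k" for s using snapp by blast
  obtain L s k where "tj L r s k" using snapp unfolding typable_def by blast
  then have "typable (JApp n u r)" using tj_app_anyhead[OF hn] snapp unfolding typable_def by blast
  moreover have "\<exists>G k. tj G (JApp n u r) s k" if "neutral (JApp n u r)" for s
  proof -
    have "neutral r" using that by (auto elim: neutral_JAppE)
    then obtain L k where "tj L r s k" using snapp by blast
    then show ?thesis using tj_app_anyhead[OF hn] snapp by blast
  qed
  ultimately show ?case by blast
next
  case (snbeta W D r s u)
  have "typable (plugD D (Lam s))" using open_typable snbeta by blast
  then have base: "\<exists>G' n'. tj G' (JApp (plugD D (Lam s)) u r) ty n'"
    if "tj G (dB_subst r 0 (contrD D s u)) ty n" for G ty n
    using base_expand that snbeta by blast
  obtain G ty n where "tj G (plugW W (dB_subst r 0 (contrD D s u))) ty n" using snbeta unfolding typable_def by blast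
  then obtain G' n' where "tj G' (plugW W (JApp (plugD D (Lam s)) u r)) ty n'"
    using W_expand[of W "dB_subst r 0 (contrD D s u)" "JApp (plugD D (Lam s)) u r" G ty n] snbeta.hyps(1) base
    by blast
  then have "typable (plugW W (JApp (plugD D (Lam s)) u r))" unfolding typable_def by blast
  then show ?case using not_neutral_plugW by blast
qed

theorem mainTheorem6:
  shows "SN_dbeta t \<longleftrightarrow> ISN t"
proof
  assume "SN_dbeta t" then show "ISN t" by (rule SN_ISN)
next
  assume "ISN t"
  then have "typable t" using ISN_typable by blast
  then show "SN_dbeta t" unfolding typable_def using tj_SN by blast
qed

end
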